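(* Let $n\ge2$, let $\gamma:I\to S^n$ be a spherical unit speed curve whose spherical dual curve $\mathbf{u}_n$ is non-singular (i.e. $\mathbf{u}_n'(s)\neq\mathbf{0}$ for all $s\in I$), let $s_0\in I$ and let $P\in S^{n-2}_{\mathbf{u}_{n-2}(s_0)}$. Then: (1) the germ $ort_{\gamma,P}:(I,s_0)\to S^n$ is $\mathcal{L}$-equivalent to $ped_{\gamma,P}:(I,s_0)\to S^n$; (2) the germ $ort_{\gamma,P}:(I,s_0)\to S^n$ is not $\mathcal{A}$-equivalent to $\mathbf{u}_n:(I,s_0)\to S^n$.
   Context: $I\subset\mathbb{R}$ is an open interval and $S^n$ the unit sphere in $\mathbb{R}^{n+1}$; the dot denotes the Euclidean inner product. A regular curve $\gamma:I\to S^n$ is a spherical unit speed curve if, setting $\mathbf{u}_{-1}\equiv\mathbf{0}$, $\mathbf{u}_0=\gamma$, $\|\mathbf{u}_0'\|\equiv 1$, $\kappa_0\equiv 0$, the maps $\mathbf{u}_i(s)=\dfrac{\mathbf{u}_{i-1}'(s)+\kappa_{i-1}(s)\mathbf{u}_{i-2}(s)}{\|\mathbf{u}_{i-1}'(s)+\kappa_{i-1}(s)\mathbf{u}_{i-2}(s)\|}$ with $\kappa_i(s)=\|\mathbf{u}_{i-1}'(s)+\kappa_{i-1}(s)\mathbf{u}_{i-2}(s)\|>0$ are well-defined for $1\le i\le n-1$ and all $s\in I$. Then $\mathbf{u}_0(s),\dots,\mathbf{u}_{n-1}(s)$ are orthonormal, and the spherical dual curve $\mathbf{u}_n:I\to S^n$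 is defined by requiring $\mathbf{u}_0(s),\dots,\mathbf{u}_n(s)$ orthonormal with $\det(\mathbf{u}_0(s),\dots,\mathbf{u}_n(s))=1$. For $P\in S^n$ with $P\cdot\mathbf{u}_n(s)\neq\pm1$, the spherical pedal curve is $ped_{\gamma,P}(s)=\dfrac{P-(P\cdot\mathbf{u}_n(s))\mathbf{u}_n(s)}{\sqrt{1-(P\cdot\mathbf{u}_n(s))^2}}$ (defined as a germ at $s_0$ when $P\neq\pm\mathbf{u}_n(s_0)$). For any $P\in S^n$ the spherical orthotomic curve is $ort_{\gamma,P}(s)=P-2(P\cdot\mathbf{u}_n(s))\mathbf{u}_n(s)$. For $-1\le i\le n$, $S^i_{\mathbf{u}_i(s)}=(S^n\setminus\{\pm\mathbf{u}_n(s)\})\cap\sum_{j=-1}^{i}\mathbb{R}\mathbf{u}_j(s)$. Two germs $f,g:(I,s_0)\to S^n$ are $\mathcal{L}$-equivalent if there is a germ of $C^\infty$ diffeomorphism $\psi:(S^n,f(s_0))\to(S^n,g(s_0))$ with $g=\psi\circ f$; they are $\mathcal{A}$-equivalent if there are germs of $C^\infty$ diffeomorphisms $\phi:(I,s_0)\to(I,s_0)$ and $\psi:(S^n,f(s_0))\to(S^n,g(s_0))$ with $g\circ\phi=\psi\circ f$. *)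

theory Defs
  imports "HOL-Analysis.Analysis"
begin

fun dder :: "'a::real_normed_vector list \<Rightarrow> ('a \<Rightarrow> 'b::real_normed_vector) \<Rightarrow> 'a \<Rightarrow> 'b" where
  "dder [] f = f"
| "dder (v # vs) f = (\<lambda>x. vector_derivative (\<lambda>t. dder vs f (x + t *\<^sub>R v)) (at 0))"

definition smooth_on :: "'a::real_normed_vector set \<Rightarrow> ('a \<Rightarrow> 'b::real_normed_vector) \<Rightarrow> bool" where
  "smooth_on U f \<longleftrightarrow>
     (\<forall>vs. continuous_on U (dder vs f) \<and>
        (\<forall>x\<in>U. \<forall>v. (\<lambda>t. dder vs f (x + t *\<^sub>R v)) differentiable (at 0)))"

text \<open>frame g i = (u_{i-1}, u_i, kappa_i), with u_{-1} = 0, u_0 = g, kappa_0 = 0.\<close>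
fun frame :: "(real \<Rightarrow> 'a::real_normed_vector) \<Rightarrow> nat \<Rightarrow>
     (real \<Rightarrow> 'a) \<times> (real \<Rightarrow> 'a) \<times> (real \<Rightarrow> real)" where
  "frame g 0 = ((\<lambda>s. 0), g, (\<lambda>s. 0))"
| "frame g (Suc i) =
     (let (p, u, k) = frame g i;
          w = (\<lambda>s. vector_derivative u (at s) + k s *\<^sub>R p s)
      in (u, (\<lambda>s. w s /\<^sub>R norm (w s)), (\<lambda>s. norm (w s))))"

definition ufr :: "(real \<Rightarrow> 'a::real_normed_vector) \<Rightarrow> nat \<Rightarrow> real \<Rightarrow> 'a" where
  "ufr g i = fst (snd (frame g i))"

definition kap :: "(real \<Rightarrow> 'a::real_normed_vector) \<Rightarrow> nat \<Rightarrow> real \<Rightarrow> real" where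
  "kap g i = snd (snd (frame g i))"

text \<open>Spherical unit speed curve in S^n (the ambient space real^'m has dimension n+1).\<close>
definition spherical_unit_speed :: "nat \<Rightarrow> real set \<Rightarrow> (real \<Rightarrow> real^'m) \<Rightarrow> bool" where
  "spherical_unit_speed n I g \<longleftrightarrow>
     smooth_on I g \<and>
     (\<forall>s\<in>I. g s \<in> sphere 0 1) \<and>
     (\<forall>s\<in>I. g differentiable (at s) \<and> norm (vector_derivative g (at s)) = 1) \<and>
     (\<forall>i\<in>{1..n-1}. \<forall>s\<in>I. kap g i s > 0)"

text \<open>The bijection idx : {0..n} -> 'm identifies
  real^'m with R^(n+1) (coordinate k of R^(n+1) is component idx k); the determinant
  det(u_0,...,u_n) is then computed as below (conjugating rows and columns by the same
  permutation does not change the determinant).\<close>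
definition dual_curve :: "nat \<Rightarrow> (nat \<Rightarrow> 'm::finite) \<Rightarrow> (real \<Rightarrow> real^'m) \<Rightarrow> real \<Rightarrow> real^'m" where
  "dual_curve n idx g s =
     (THE v. (\<forall>i<n. ufr g i s \<bullet> v = 0) \<and> norm v = 1 \<and>
        det (\<chi> a. (let j = inv_into {..n} idx a in if j = n then v else ufr g j s)) = 1)"

definition pedal :: "nat \<Rightarrow> (nat \<Rightarrow> 'm::finite) \<Rightarrow> (real \<Rightarrow> real^'m) \<Rightarrow> real^'m \<Rightarrow> real \<Rightarrow> real^'m" where
  "pedal n idx g P s =
     (let U = dual_curve n idx g s in
       (P - (P \<bullet> U) *\<^sub>R U) /\<^sub>R sqrt (1 - (P \<bullet> U)\<^sup>2))"

definition orthotomic :: "nat \<Rightarrow> (nat \<Rightarrow> 'm::finite) \<Rightarrow> (real \<Rightarrow> real^'m) \<Rightarrow> real^'m \<Rightarrow> real \<Rightarrow> real^'m" where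
  "orthotomic n idx g P s =
     (let U = dual_curve n idx g s in P - (2 * (P \<bullet> U)) *\<^sub>R U)"

text \<open>S^i_{u_i(s)} for 0 <= i (u_{-1} = 0 contributes nothing to the span).\<close>
definition sub_sphere :: "nat \<Rightarrow> (nat \<Rightarrow> 'm::finite) \<Rightarrow> (real \<Rightarrow> real^'m) \<Rightarrow> nat \<Rightarrow> real \<Rightarrow> (real^'m) set" where
  "sub_sphere n idx g i s =
     (sphere 0 1 - {dual_curve n idx g s, - dual_curve n idx g s}) \<inter> span ((\<lambda>j. ufr g j s) ` {..i})"

text \<open>Germ of a C-infinity diffeomorphism of the (embedded) set M from (M,p) to (M,q):
  locally the restriction of ambient C-infinity maps that are mutually inverse on M.\<close>
definition diffeo_germ :: "'a::real_normed_vector set \<Rightarrow> 'a \<Rightarrow> 'a \<Rightarrow> ('a \<Rightarrow> 'a) \<Rightarrow> bool" where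
  "diffeo_germ M p q \<psi> \<longleftrightarrow> \<psi> p = q \<and>
     (\<exists>U V \<phi>. open U \<and> open V \<and> p \<in> U \<and> q \<in> V \<and> smooth_on U \<psi> \<and> smooth_on V \<phi> \<and>
        (\<forall>x\<in>M \<inter> U. \<psi> x \<in> M \<inter> V \<and> \<phi> (\<psi> x) = x) \<and>
        (\<forall>y\<in>M \<inter> V. \<phi> y \<in> M \<inter> U \<and> \<psi> (\<phi> y) = y))"

definition L_equiv :: "(real \<Rightarrow> real^'m) \<Rightarrow> (real \<Rightarrow> real^'m) \<Rightarrow> real \<Rightarrow> bool" where
  "L_equiv f g s0 \<longleftrightarrow>
     (\<exists>\<psi>. diffeo_germ (sphere 0 1) (f s0) (g s0) \<psi> \<and> (\<forall>\<^sub>F s in nhds s0. g s = \<psi> (f s)))"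

definition A_equiv :: "(real \<Rightarrow> real^'m) \<Rightarrow> (real \<Rightarrow> real^'m) \<Rightarrow> real \<Rightarrow> bool" where
  "A_equiv f g s0 \<longleftrightarrow>
     (\<exists>\<phi> \<psi>. diffeo_germ (UNIV :: real set) s0 s0 \<phi> \<and>
        diffeo_germ (sphere 0 1) (f s0) (g s0) \<psi> \<and>
        (\<forall>\<^sub>F s in nhds s0. g (\<phi> s) = \<psi> (f s)))"

end

theory Submission
  imports Defs
begin


definition VD :: "(real \<Rightarrow> 'a::real_normed_vector) \<Rightarrow> real \<Rightarrow> 'a" where
  "VD f = (\<lambda>s. vector_derivative f (at s))"

primrec smk :: "real set \<Rightarrow> nat \<Rightarrow> (real \<Rightarrow> 'a::real_normed_vector) \<Rightarrow> bool" where
  "smk I 0 f = (\<forall>x\<in>I. f differentiable at x)"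
| "smk I (Suc k) f = ((\<forall>x\<in>I. f differentiable at x) \<and> smk I k (VD f))"

definition sm1 :: "real set \<Rightarrow> (real \<Rightarrow> 'a::real_normed_vector) \<Rightarrow> bool" where
  "sm1 I f = (\<forall>k. smk I k f)"

lemma hvd_cong_open:
  fixes f g :: "real \<Rightarrow> 'a::real_normed_vector"
  assumes "open I" "x \<in> I" "\<And>y. y \<in> I \<Longrightarrow> f y = g y"
  shows "(f has_vector_derivative d) (at x) \<longleftrightarrow> (g has_vector_derivative d) (at x)"
  using assms has_vector_derivative_transform_within_open by metis

lemma VD_cong:
  assumes "open I" "x \<in> I" "\<And>y. y \<in> I \<Longrightarrow> f y = g y"
  shows "VD f x = VD g x"
  unfolding VD_def vector_derivative_def using hvd_cong_open[OF assms] by simp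

lemma diff_cong_open:
  fixes f g :: "real \<Rightarrow> 'a::real_normed_vector"
  assumes "open I" "x \<in> I" "\<And>y. y \<in> I \<Longrightarrow> f y = g y"
  shows "f differentiable at x \<longleftrightarrow> g differentiable at x"
proof -
  have "\<And>f g. (\<And>y. y \<in> I \<Longrightarrow> f y = g y) \<Longrightarrow> f differentiable at x \<Longrightarrow> (g::real\<Rightarrow>'a) differentiable at x"
    unfolding differentiable_def using assms(1,2) has_derivative_transform_within_open by blast
  then show ?thesis using assms(3) by (metis)
qed

lemma smk_cong:
  assumes "open I" "\<And>y. y \<in> I \<Longrightarrow> f y = g y"
  shows "smk I k f = smk I k g"
  using assms(2)
proof (induction k arbitrary: f g)
  case 0
  have "\<And>x. x\<in>I \<Longrightarrow> (f differentiable at x) = (g differentiable at x)"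
    by (rule diff_cong_open[OF assms(1)]) (use 0 in auto)
  then show ?case by simp
next
  case (Suc k)
  have "smk I k (VD f) = smk I k (VD g)"
    using Suc.IH VD_cong[OF assms(1)] Suc.prems by blast
  moreover have "\<And>x. x\<in>I \<Longrightarrow> (f differentiable at x) = (g differentiable at x)"
    by (rule diff_cong_open[OF assms(1)]) (use Suc in auto)
  ultimately show ?case by simp
qed

lemma smk_mono: "smk I (Suc k) f \<Longrightarrow> smk I k f"
  by (induction k arbitrary: f) auto

lemma smk_VD: "smk I (Suc k) f \<Longrightarrow> smk I k (VD f)" by simp

lemma smk_diff: "smk I k f \<Longrightarrow> x \<in> I \<Longrightarrow> f differentiable at x"
  by (cases k) auto

lemma VD_has: "f differentiable at x \<Longrightarrow> (f has_vector_derivative VD f x) (at x)"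
  unfolding VD_def using vector_derivative_works by blast

lemma VD_at: "(f has_vector_derivative d) (at x) \<Longrightarrow> VD f x = d"
  unfolding VD_def by (rule vector_derivative_at)

lemma bil_diff:
  fixes f :: "real \<Rightarrow> 'a::real_normed_vector" and g :: "real \<Rightarrow> 'b::real_normed_vector"
    and prod :: "'a \<Rightarrow> 'b \<Rightarrow> 'c::real_normed_vector"
  assumes "bounded_bilinear prod" "f differentiable at x" "g differentiable at x"
  shows "(\<lambda>x. prod (f x) (g x)) differentiable at x"
  using bounded_bilinear.has_vector_derivative[OF assms(1) VD_has[OF assms(2)] VD_has[OF assms(3)]]
  by (rule differentiableI_vector)

lemma smk_const: "smk I k (\<lambda>x. c)"
proof (induction k arbitrary: c)
  case 0 then show ?case by simp
next
  case (Suc k)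
  have "VD (\<lambda>x. c) = (\<lambda>x. 0)" unfolding VD_def by (simp add: fun_eq_iff)
  then show ?case using Suc by simp
qed

lemma smk_add:
  assumes "open I" shows "smk I k f \<Longrightarrow> smk I k g \<Longrightarrow> smk I k (\<lambda>x. f x + g x)"
proof (induction k arbitrary: f g)
  case 0 then show ?case by (simp add: differentiable_add)
next
  case (Suc k)
  have df: "\<And>x. x\<in>I \<Longrightarrow> f differentiable at x" and dg: "\<And>x. x\<in>I \<Longrightarrow> g differentiable at x"
    using Suc.prems by simp_all
  have d: "\<forall>x\<in>I. (\<lambda>x. f x + g x) differentiable at x" using df dg by (simp add: differentiable_add)
  have "smk I k (\<lambda>x. VD f x + VD g x)" using Suc.prems by (intro Suc.IH) simp_all
  moreover have "\<And>x. x \<in> I \<Longrightarrow> VD (\<lambda>x. f x + g x) x = VD f x + VD g x"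
    by (rule VD_at, rule has_vector_derivative_add; rule VD_has) (simp_all add: df dg)
  ultimately have "smk I k (VD (\<lambda>x. f x + g x))"
    using smk_cong[OF assms, of "VD (\<lambda>x. f x + g x)" "\<lambda>x. VD f x + VD g x" k] by simp
  then show ?case using d by simp
qed

lemma smk_bil:
  fixes f :: "real \<Rightarrow> 'a::real_normed_vector" and g :: "real \<Rightarrow> 'b::real_normed_vector"
    and prod :: "'a \<Rightarrow> 'b \<Rightarrow> 'c::real_normed_vector"
  assumes "open I" and bb: "bounded_bilinear prod"
  shows "smk I k f \<Longrightarrow> smk I k g \<Longrightarrow> smk I k (\<lambda>x. prod (f x) (g x))"
proof (induction k arbitrary: f g)
  case 0 then show ?case
    using bil_diff[OF bb] by simp
next
  case (Suc k)
  have df: "\<And>x. x\<in>I \<Longrightarrow> f differentiable at x" and dg: "\<And>x. x\<in>I \<Longrightarrow> g differentiable at x"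
    using Suc.prems by simp_all
  have d: "\<forall>x\<in>I. (\<lambda>x. prod (f x) (g x)) differentiable at x"
    using bil_diff[OF bb] df dg by simp
  have "smk I k (\<lambda>x. prod (f x) (VD g x) + prod (VD f x) (g x))"
  proof (rule smk_add[OF assms(1)])
    have mf: "smk I k f" "smk I k g" using smk_mono Suc.prems by blast+
    show "smk I k (\<lambda>x. prod (f x) (VD g x))" using mf Suc.prems by (intro Suc.IH) simp_all
    show "smk I k (\<lambda>x. prod (VD f x) (g x))" using mf Suc.prems by (intro Suc.IH) simp_all
  qed
  moreover have "\<And>x. x \<in> I \<Longrightarrow> VD (\<lambda>x. prod (f x) (g x)) x = prod (f x) (VD g x) + prod (VD f x) (g x)"
    by (rule VD_at, rule bounded_bilinear.has_vector_derivative[OF bb]; rule VD_has) (simp_all add: df dg)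
  ultimately have "smk I k (VD (\<lambda>x. prod (f x) (g x)))"
    using smk_cong[OF assms(1), of "VD (\<lambda>x. prod (f x) (g x))" "\<lambda>x. prod (f x) (VD g x) + prod (VD f x) (g x)" k] by simp
  then show ?case using d by simp
qed


lemmas smk_mult = smk_bil[OF _ bounded_bilinear_mult]
lemmas smk_scaleR = smk_bil[OF _ bounded_bilinear_scaleR]
lemmas smk_inner = smk_bil[OF _ bounded_bilinear_inner]


lemma smk_inverse:
  fixes f :: "real \<Rightarrow> real"
  assumes "open I"
  shows "(\<And>x. x\<in>I \<Longrightarrow> f x \<noteq> 0) \<Longrightarrow> smk I k f \<Longrightarrow> smk I k (\<lambda>x. inverse (f x))"
proof (induction k arbitrary: f)
  have hd: "((\<lambda>x. inverse (f x)) has_vector_derivative (-1) * (VD f x * (inverse (f x) * inverse (f x)))) (at x)"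
    if "f differentiable at x" "f x \<noteq> 0" for f :: "real \<Rightarrow> real" and x
  proof -
    have "(f has_field_derivative VD f x) (at x)"
      using VD_has[OF that(1)] has_real_derivative_iff_has_vector_derivative by blast
    from DERIV_inverse_fun[OF this that(2)] show ?thesis
      unfolding has_real_derivative_iff_has_vector_derivative[symmetric]
      by (simp add: power2_eq_square inverse_mult_distrib)
  qed
  {
    case 0 then show ?case using hd differentiableI_vector by fastforce
  next
    case (Suc k)
    have df: "\<And>x. x\<in>I \<Longrightarrow> f differentiable at x" using Suc.prems by simp_all
    have d: "\<forall>x\<in>I. (\<lambda>x. inverse (f x)) differentiable at x"
      using hd df Suc.prems(1) differentiableI_vector by blast
    have mf: "smk I k f" using smk_mono Suc.prems by blast
    have ik: "smk I k (\<lambda>x. inverse (f x))" using Suc.IH[OF Suc.prems(1) mf] .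
    have "smk I k (\<lambda>x. (-1) * (VD f x * (inverse (f x) * inverse (f x))))"
      by (intro smk_mult[OF assms] smk_const ik) (use Suc.prems in simp)
    moreover have "\<And>x. x \<in> I \<Longrightarrow> VD (\<lambda>x. inverse (f x)) x = (-1) * (VD f x * (inverse (f x) * inverse (f x)))"
      using hd df Suc.prems(1) VD_at by blast
    ultimately have "smk I k (VD (\<lambda>x. inverse (f x)))"
      using smk_cong[OF assms(1), of "VD (\<lambda>x. inverse (f x))" "\<lambda>x. (-1) * (VD f x * (inverse (f x) * inverse (f x)))" k] by simp
    then show ?case using d by simp
  }
qed

lemma smk_sqrt:
  fixes f :: "real \<Rightarrow> real"
  assumes "open I"
  shows "(\<And>x. x\<in>I \<Longrightarrow> f x > 0) \<Longrightarrow> smk I k f \<Longrightarrow> smk I k (\<lambda>x. sqrt (f x))"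
proof (induction k arbitrary: f)
  have hd: "((\<lambda>x. sqrt (f x)) has_vector_derivative VD f x * ((1/2) * inverse (sqrt (f x)))) (at x)"
    if "f differentiable at x" "f x > 0" for f :: "real \<Rightarrow> real" and x
  proof -
    have "(f has_field_derivative VD f x) (at x)"
      using VD_has[OF that(1)] has_real_derivative_iff_has_vector_derivative by blast
    from DERIV_chain2[OF DERIV_real_sqrt[OF that(2)] this] show ?thesis
      unfolding has_real_derivative_iff_has_vector_derivative[symmetric]
      by (simp add: mult.commute)
  qed
  {
    case 0 then show ?case using hd differentiableI_vector by fastforce
  next
    case (Suc k)
    have df: "\<And>x. x\<in>I \<Longrightarrow> f differentiable at x" using Suc.prems by simp_all
    have d: "\<forall>x\<in>I. (\<lambda>x. sqrt (f x)) differentiable at x"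
      using hd df Suc.prems(1) differentiableI_vector by blast
    have mf: "smk I k f" using smk_mono Suc.prems by blast
    have ik: "smk I k (\<lambda>x. sqrt (f x))" using Suc.IH[OF Suc.prems(1) mf] .
    have ik2: "smk I k (\<lambda>x. inverse (sqrt (f x)))"
      using smk_inverse[OF assms, of "\<lambda>x. sqrt (f x)", OF _ ik] Suc.prems(1) by force
    have "smk I k (\<lambda>x. VD f x * ((1/2) * inverse (sqrt (f x))))"
      by (intro smk_mult[OF assms] smk_const ik2) (use Suc.prems in simp)
    moreover have "\<And>x. x \<in> I \<Longrightarrow> VD (\<lambda>x. sqrt (f x)) x = VD f x * ((1/2) * inverse (sqrt (f x)))"
      using hd df Suc.prems(1) VD_at by blast
    ultimately have "smk I k (VD (\<lambda>x. sqrt (f x)))"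
      using smk_cong[OF assms(1), of "VD (\<lambda>x. sqrt (f x))" "\<lambda>x. VD f x * ((1/2) * inverse (sqrt (f x)))" k] by simp
    then show ?case using d by simp
  }
qed

lemma smk_norm:
  fixes f :: "real \<Rightarrow> 'a::real_inner"
  assumes "open I" "\<And>x. x\<in>I \<Longrightarrow> f x \<noteq> 0" "smk I k f"
  shows "smk I k (\<lambda>x. norm (f x))"
proof -
  have "smk I k (\<lambda>x. sqrt (f x \<bullet> f x))"
    using assms by (intro smk_sqrt smk_inner) auto
  then show ?thesis by (simp add: norm_eq_sqrt_inner)
qed

lemma smk_normalize:
  fixes f :: "real \<Rightarrow> 'a::real_inner"
  assumes "open I" "\<And>x. x\<in>I \<Longrightarrow> f x \<noteq> 0" "smk I k f"
  shows "smk I k (\<lambda>x. f x /\<^sub>R norm (f x))"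
  using assms by (intro smk_scaleR smk_inverse smk_norm) auto



lemma sm1_VD: "sm1 I f \<Longrightarrow> sm1 I (VD f)"
  unfolding sm1_def by (metis smk.simps(2))

lemma sm1_diff: "sm1 I f \<Longrightarrow> x \<in> I \<Longrightarrow> f differentiable at x"
  unfolding sm1_def using smk_diff by blast

lemma shift_hvd:
  fixes h :: "real \<Rightarrow> 'a::real_normed_vector"
  shows "(h has_vector_derivative d) (at x) \<longleftrightarrow> ((\<lambda>t. h (x + t)) has_vector_derivative d) (at 0)"
proof
  assume a: "(h has_vector_derivative d) (at x)"
  have "((\<lambda>t. x + t) has_vector_derivative 1) (at 0)"
    by (auto intro!: derivative_eq_intros)
  from vector_diff_chain_at[OF this] a show "((\<lambda>t. h (x + t)) has_vector_derivative d) (at 0)"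
    by (simp add: o_def)
next
  assume a: "((\<lambda>t. h (x + t)) has_vector_derivative d) (at 0)"
  have "((\<lambda>y. y - x) has_vector_derivative 1) (at x)"
    by (auto intro!: derivative_eq_intros)
  from vector_diff_chain_at[OF this, of "\<lambda>t. h (x + t)" d] a
  show "(h has_vector_derivative d) (at x)" by (simp add: o_def)
qed

lemma shift_vd:
  fixes h :: "real \<Rightarrow> 'a::real_normed_vector"
  shows "vector_derivative (\<lambda>t. h (x + t)) (at 0) = vector_derivative h (at x)"
  unfolding vector_derivative_def using shift_hvd[of h _ x] by simp

lemma shift_diff:
  fixes h :: "real \<Rightarrow> 'a::real_normed_vector"
  shows "(\<lambda>t. h (x + t)) differentiable (at 0) \<longleftrightarrow> h differentiable (at x)"
proof
  assume "(\<lambda>t. h (x + t)) differentiable (at 0)"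
  then have "((\<lambda>t. h (x + t)) has_vector_derivative vector_derivative (\<lambda>t. h (x + t)) (at 0)) (at 0)"
    using vector_derivative_works by blast
  then show "h differentiable (at x)" using shift_hvd differentiableI_vector by blast
next
  assume "h differentiable (at x)"
  then have "(h has_vector_derivative vector_derivative h (at x)) (at x)"
    using vector_derivative_works by blast
  then show "(\<lambda>t. h (x + t)) differentiable (at 0)" using shift_hvd differentiableI_vector by blast
qed

lemma smk_funpow:
  "(\<And>j x. x \<in> I \<Longrightarrow> (VD^^j) f differentiable at x) \<Longrightarrow> smk I k f"
proof (induction k arbitrary: f)
  case 0 then show ?case using funpow_0 by (metis smk.simps(1))
next
  case (Suc k)
  have "smk I k (VD f)"
  proof (rule Suc.IH)
    fix j x assume "x \<in> I"
    have "(VD^^j)(VD f) = (VD^^(Suc j)) f" by (simp only: funpow_Suc_right o_def)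
    then show "(VD^^j)(VD f) differentiable at x" using Suc.prems[OF \<open>x \<in> I\<close>, of "Suc j"] by simp
  qed
  then show ?case using Suc.prems[of _ 0] by simp
qed

lemma smooth_on_sm1:
  fixes g :: "real \<Rightarrow> 'a::real_normed_vector"
  assumes "open I" "smooth_on I g"
  shows "sm1 I g"
proof -
  have A: "\<forall>x\<in>I. (VD^^k) g x = dder (replicate k 1) g x" for k
  proof (induction k)
    case 0 then show ?case by simp
  next
    case (Suc k)
    show ?case
    proof
      fix x assume x: "x \<in> I"
      have "(VD^^Suc k) g x = VD ((VD^^k) g) x" by simp
      also have "\<dots> = VD (dder (replicate k 1) g) x"
        using VD_cong[OF assms(1) x] Suc.IH by blast
      also have "\<dots> = vector_derivative (\<lambda>t. dder (replicate k 1) g (x + t)) (at 0)"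
        unfolding VD_def shift_vd ..
      also have "\<dots> = dder (replicate (Suc k) 1) g x" by simp
      finally show "(VD^^Suc k) g x = dder (replicate (Suc k) 1) g x" .
    qed
  qed
  have B: "(VD^^k) g differentiable at x" if x: "x \<in> I" for k x
  proof -
    have "(\<lambda>t. dder (replicate k 1) g (x + t *\<^sub>R 1)) differentiable (at 0)"
      using assms(2) x unfolding smooth_on_def by blast
    then have "dder (replicate k 1) g differentiable at x" using shift_diff[THEN iffD1] by simp
    then show ?thesis using diff_cong_open[OF assms(1) x, of "(VD^^k) g"] A by blast
  qed
  show ?thesis unfolding sm1_def using B smk_funpow by blast
qed

section \<open>Frame\<close>

definition pfr :: "(real \<Rightarrow> 'a::real_normed_vector) \<Rightarrow> nat \<Rightarrow> real \<Rightarrow> 'a" where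
  "pfr g i = fst (frame g i)"

definition WW :: "(real \<Rightarrow> 'a::real_normed_vector) \<Rightarrow> nat \<Rightarrow> real \<Rightarrow> 'a" where
  "WW g i = (\<lambda>s. VD (ufr g i) s + kap g i s *\<^sub>R pfr g i s)"

lemma frame_eq: "frame g i = (pfr g i, ufr g i, kap g i)"
  by (simp add: pfr_def ufr_def kap_def)

lemma frame_0: "ufr g 0 = g" "pfr g 0 = (\<lambda>s. 0)" "kap g 0 = (\<lambda>s. 0)"
  by (simp_all add: pfr_def ufr_def kap_def)

lemma frame_Suc_eq: "frame g (Suc i) = (ufr g i, (\<lambda>s. WW g i s /\<^sub>R norm (WW g i s)), (\<lambda>s. norm (WW g i s)))"
proof -
  have "frame g (Suc i) = (let (p, u, k) = (pfr g i, ufr g i, kap g i);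
          w = (\<lambda>s. vector_derivative u (at s) + k s *\<^sub>R p s)
      in (u, (\<lambda>s. w s /\<^sub>R norm (w s)), (\<lambda>s. norm (w s))))"
    unfolding frame.simps(2) frame_eq[of g i] ..
  then show ?thesis by (simp add: WW_def VD_def Let_def)
qed

lemma frame_Suc:
  "ufr g (Suc i) = (\<lambda>s. WW g i s /\<^sub>R norm (WW g i s))"
  "pfr g (Suc i) = ufr g i"
  "kap g (Suc i) = (\<lambda>s. norm (WW g i s))"
  using frame_Suc_eq[of g i] unfolding ufr_def[of g "Suc i"] pfr_def[of g "Suc i"] kap_def[of g "Suc i"]
  by simp_all



lemma sm1_const: "sm1 I (\<lambda>x. c)" unfolding sm1_def using smk_const by blast
lemma sm1_add: "open I \<Longrightarrow> sm1 I f \<Longrightarrow> sm1 I g \<Longrightarrow> sm1 I (\<lambda>x. f x + g x)"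
  unfolding sm1_def using smk_add by blast
lemma sm1_scaleR: "open I \<Longrightarrow> sm1 I f \<Longrightarrow> sm1 I g \<Longrightarrow> sm1 I (\<lambda>x. f x *\<^sub>R g x)"
  unfolding sm1_def using smk_scaleR by blast
lemma sm1_norm: "open I \<Longrightarrow> (\<And>x. x\<in>I \<Longrightarrow> f x \<noteq> 0) \<Longrightarrow> sm1 I f \<Longrightarrow> sm1 I (\<lambda>x. norm (f x::'a::real_inner))"
  unfolding sm1_def using smk_norm by blast
lemma sm1_normalize: "open I \<Longrightarrow> (\<And>x. x\<in>I \<Longrightarrow> f x \<noteq> 0) \<Longrightarrow> sm1 I f \<Longrightarrow> sm1 I (\<lambda>x. (f x::'a::real_inner) /\<^sub>R norm (f x))"
  unfolding sm1_def using smk_normalize by blast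

lemma frame_smooth:
  fixes g :: "real \<Rightarrow> 'a::real_inner"
  assumes I: "open I" and g: "sm1 I g" and kp: "\<And>i s. i \<in> {1..n-1} \<Longrightarrow> s\<in>I \<Longrightarrow> kap g i s > 0"
  shows "i \<le> n-1 \<Longrightarrow> sm1 I (ufr g i) \<and> sm1 I (pfr g i) \<and> sm1 I (kap g i)"
proof (induction i)
  case 0 then show ?case using g by (simp add: frame_0 sm1_const)
next
  case (Suc i)
  then have ih: "sm1 I (ufr g i)" "sm1 I (pfr g i)" "sm1 I (kap g i)" by auto
  have W: "sm1 I (WW g i)" unfolding WW_def
    using ih by (intro sm1_add[OF I] sm1_scaleR[OF I] sm1_VD) auto
  have nz: "WW g i s \<noteq> 0" if "s \<in> I" for s
    using kp[of "Suc i" s] Suc.prems that by (auto simp: frame_Suc)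
  show ?case unfolding frame_Suc
    using W nz ih by (auto intro!: sm1_normalize[OF I] sm1_norm[OF I])
qed

lemma frenet:
  fixes g :: "real \<Rightarrow> 'a::real_inner"
  assumes kp: "kap g (Suc i) s > 0"
  shows "VD (ufr g i) s = kap g (Suc i) s *\<^sub>R ufr g (Suc i) s - kap g i s *\<^sub>R pfr g i s"
proof -
  have "norm (WW g i s) \<noteq> 0" using kp by (simp add: frame_Suc)
  then have "kap g (Suc i) s *\<^sub>R ufr g (Suc i) s = WW g i s" by (simp add: frame_Suc)
  then show ?thesis by (simp add: WW_def)
qed

lemma inner_const_deriv:
  fixes f h :: "real \<Rightarrow> 'a::real_inner"
  assumes "open I" "s \<in> I" "f differentiable at s" "h differentiable at s"
    "\<And>y. y\<in>I \<Longrightarrow> f y \<bullet> h y = c"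
  shows "f s \<bullet> VD h s + VD f s \<bullet> h s = 0"
proof -
  have d1: "((\<lambda>y. f y \<bullet> h y) has_vector_derivative (f s \<bullet> VD h s + VD f s \<bullet> h s)) (at s)"
    by (rule bounded_bilinear.has_vector_derivative[OF bounded_bilinear_inner]; rule VD_has)
      (use assms in auto)
  have d2: "((\<lambda>y. f y \<bullet> h y) has_vector_derivative 0) (at s)"
    using has_vector_derivative_transform_within_open[OF has_vector_derivative_const[of c] assms(1,2), of "\<lambda>y. f y \<bullet> h y"]
      assms(5) by auto
  show ?thesis using vector_derivative_unique_at[OF d1 d2] .
qed



lemma frame_orthonormal:
  fixes g :: "real \<Rightarrow> 'a::real_inner"
  assumes I: "open I" and g: "sm1 I g" and kp: "\<And>i s. i \<in> {1..n-1} \<Longrightarrow> s\<in>I \<Longrightarrow> kap g i s > 0"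
    and g1: "\<And>s. s \<in> I \<Longrightarrow> norm (g s) = 1"
  shows "i \<le> n-1 \<Longrightarrow> s\<in>I \<Longrightarrow> j \<le> i \<Longrightarrow> l \<le> i \<Longrightarrow> ufr g j s \<bullet> ufr g l s = (if j = l then 1 else 0)"
proof (induction i arbitrary: s j l)
  case 0 then show ?case using g1[of s] by (simp add: frame_0 dot_square_norm)
next
  case (Suc i)
  note ON = Suc.IH
  have iN: "i \<le> n-1" using Suc.prems by simp
  have sm: "\<And>j. j \<le> n-1 \<Longrightarrow> sm1 I (ufr g j)" using frame_smooth[OF I g kp] by blast
  have kpos: "\<And>j s. j \<le> i \<Longrightarrow> s \<in> I \<Longrightarrow> kap g (Suc j) s > 0"
    using kp Suc.prems(1) by auto
  have key: "WW g i s \<bullet> ufr g j s = 0" if s: "s \<in> I" and j: "j \<le> i" for s j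
  proof -
    let ?u = "ufr g" and ?p = "pfr g" and ?k = "kap g"
    have c: "\<And>y. y\<in>I \<Longrightarrow> ?u i y \<bullet> ?u j y = (if i = j then 1 else 0)"
      using ON iN j by auto
    have d: "?u i s \<bullet> VD (?u j) s + VD (?u i) s \<bullet> ?u j s = 0"
      by (rule inner_const_deriv[OF I s _ _ c]) (use sm1_diff[OF sm[of i] s] sm1_diff[OF sm[of j] s] iN j in auto)
    have W: "WW g i s \<bullet> ?u j s = VD (?u i) s \<bullet> ?u j s + ?k i s * (?p i s \<bullet> ?u j s)"
      by (simp add: WW_def inner_add_left)
    show ?thesis
    proof (cases "j = i")
      case True
      have "VD (?u i) s \<bullet> ?u i s = 0" using d True by (simp add: inner_commute)
      moreover have "?p i s \<bullet> ?u i s = 0"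
      proof (cases i)
        case 0 then show ?thesis by (simp add: frame_0)
      next
        case (Suc i') then show ?thesis using ON[of s i' i] iN s by (simp add: frame_Suc)
      qed
      ultimately show ?thesis using W True by simp
    next
      case False
      then have ji: "j < i" using j by simp
      then obtain i' where i': "i = Suc i'" by (cases i) auto
      have fr: "VD (?u j) s = ?k (Suc j) s *\<^sub>R ?u (Suc j) s - ?k j s *\<^sub>R ?p j s"
        by (rule frenet) (use kpos ji s in auto)
      have up: "?u i s \<bullet> ?p j s = 0"
      proof (cases j)
        case 0 then show ?thesis by (simp add: frame_0)
      next
        case (Suc j') then show ?thesis using ON[of s i j'] iN s ji by (simp add: frame_Suc)
      qed
      have uu: "?u i s \<bullet> ?u (Suc j) s = (if i = Suc j then 1 else 0)"
        using ON[of s i "Suc j"] iN s ji by simp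
      have pu: "?p i s \<bullet> ?u j s = (if i' = j then 1 else 0)"
        using ON[of s i' j] iN s ji i' by (simp add: frame_Suc)
      have "VD (?u i) s \<bullet> ?u j s = - (?u i s \<bullet> VD (?u j) s)" using d by simp
      also have "\<dots> = - (?k (Suc j) s * (if i = Suc j then 1 else 0))"
        using uu up by (simp add: fr inner_diff_right)
      finally show ?thesis using W pu i' by auto
    qed
  qed
  have nz: "WW g i s \<noteq> 0" if "s \<in> I" for s
    using kp[of "Suc i" s] Suc.prems that by (auto simp: frame_Suc)
  have uS: "ufr g (Suc i) s \<bullet> ufr g j s = 0" if "s \<in> I" "j \<le> i" for s j
    using key[OF that] by (simp add: frame_Suc)
  have uSS: "ufr g (Suc i) s \<bullet> ufr g (Suc i) s = 1" if "s \<in> I" for s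
    using nz[OF that] by (simp add: frame_Suc dot_square_norm)
  show ?case
  proof (cases "j = Suc i")
    case True
    show ?thesis
    proof (cases "l = Suc i")
      case True with \<open>j = Suc i\<close> show ?thesis using uSS Suc.prems by simp
    next
      case False then show ?thesis using uS[of s l] \<open>j = Suc i\<close> Suc.prems by simp
    qed
  next
    case False
    show ?thesis
    proof (cases "l = Suc i")
      case True then show ?thesis using uS[of s j] False Suc.prems by (simp add: inner_commute)
    next
      case False2: False then show ?thesis using ON[of s j l] False iN Suc.prems by simp
    qed
  qed
qed



definition Mx :: "nat \<Rightarrow> (nat \<Rightarrow> 'm::finite) \<Rightarrow> (nat \<Rightarrow> real^'m) \<Rightarrow> real^'m \<Rightarrow> real^'m^'m" where
  "Mx n idx u v = (\<chi> a. (let j = inv_into {..n} idx a in if j = n then v else u j))"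

lemma dual_curve_Mx: "dual_curve n idx g s =
   (THE v. (\<forall>i<n. ufr g i s \<bullet> v = 0) \<and> norm v = 1 \<and> det (Mx n idx (\<lambda>j. ufr g j s) v) = 1)"
  unfolding dual_curve_def Mx_def ..

lemma idx_facts:
  fixes idx :: "nat \<Rightarrow> 'm::finite"
  assumes b: "bij_betw idx {..n} (UNIV::'m::finite set)"
  shows "inv_into {..n} idx a \<le> n" "idx (inv_into {..n} idx a) = a"
    "j \<le> n \<Longrightarrow> inv_into {..n} idx (idx j) = j"
    "inv_into {..n} idx a = n \<longleftrightarrow> a = idx n"
    "inv_into {..n} idx a = inv_into {..n} idx b \<longleftrightarrow> a = b"
proof -
  show 1: "inv_into {..n} idx a \<le> n" using b bij_betw_inv_into by (metis UNIV_I atMost_iff bij_betw_apply)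
  show 2: "idx (inv_into {..n} idx a) = a" using b by (meson UNIV_I bij_betw_inv_into_right)
  have g3: "\<And>j. j \<le> n \<Longrightarrow> inv_into {..n} idx (idx j) = j" using b by (simp add: bij_betw_inv_into_left)
  then show "j \<le> n \<Longrightarrow> inv_into {..n} idx (idx j) = j" by blast
  show "inv_into {..n} idx a = n \<longleftrightarrow> a = idx n" using 2 g3[of n, OF order_refl] by auto
  have g2: "\<And>a. idx (inv_into {..n} idx a) = a" using b by (meson UNIV_I bij_betw_inv_into_right)
  show "inv_into {..n} idx a = inv_into {..n} idx b \<longleftrightarrow> a = b" using g2 by metis
qed

lemma Mx_row:
  fixes idx :: "nat \<Rightarrow> 'm::finite"
  assumes b: "bij_betw idx {..n} (UNIV::'m::finite set)"
  shows "Mx n idx u v $ a = (if a = idx n then v else u (inv_into {..n} idx a))"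
  using idx_facts(4)[OF b] by (simp add: Mx_def Let_def)

lemma Mx_orth:
  fixes u :: "nat \<Rightarrow> real^'m::finite"
  assumes b: "bij_betw idx {..n} (UNIV::'m set)"
    and on: "\<And>j l. j < n \<Longrightarrow> l < n \<Longrightarrow> u j \<bullet> u l = (if j = l then 1 else 0)"
    and ov: "\<And>i. i < n \<Longrightarrow> u i \<bullet> v = 0" and nv: "norm v = 1"
  shows "orthogonal_matrix (Mx n idx u v)"
proof -
  have r: "row a (Mx n idx u v) = Mx n idx u v $ a" for a by (simp add: row_def vec_eq_iff)
  have lt: "a \<noteq> idx n \<Longrightarrow> inv_into {..n} idx a < n" for a
    using idx_facts[OF b] by (metis le_neq_implies_less)
  have "norm (Mx n idx u v $ a) = 1" for a
  proof (cases "a = idx n")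
    case True then show ?thesis using nv by (simp add: Mx_row[OF b])
  next
    case False
    have "u (inv_into {..n} idx a) \<bullet> u (inv_into {..n} idx a) = 1" using on lt[OF False] by simp
    then show ?thesis using False by (simp add: Mx_row[OF b] norm_eq_1)
  qed
  moreover have "orthogonal (Mx n idx u v $ a) (Mx n idx u v $ c)" if "a \<noteq> c" for a c
  proof -
    have ne: "inv_into {..n} idx a \<noteq> inv_into {..n} idx c" using that idx_facts(5)[OF b] by blast
    show ?thesis
      using ov lt on[OF lt lt, of a c] ne that
      by (auto simp: Mx_row[OF b] orthogonal_def inner_commute)
  qed
  ultimately show ?thesis unfolding orthogonal_matrix_orthonormal_rows r by blast
qed

lemma Mx_scale:
  fixes idx :: "nat \<Rightarrow> 'm::finite"
  assumes b: "bij_betw idx {..n} (UNIV::'m::finite set)"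
  shows "det (Mx n idx u (c *\<^sub>R v)) = c * det (Mx n idx u v)"
proof -
  have "Mx n idx u (c *\<^sub>R v) = (\<chi> i. if i = idx n then c *s v else Mx n idx u v $ i)"
    by (simp add: vec_eq_iff Mx_row[OF b] scalar_mult_eq_scaleR)
  moreover have "Mx n idx u v = (\<chi> i. if i = idx n then v else Mx n idx u v $ i)"
    by (simp add: vec_eq_iff Mx_row[OF b])
  ultimately show ?thesis using det_row_mul[of "idx n" c "\<lambda>i. v" "\<lambda>i. Mx n idx u v $ i"] by metis
qed

lemma dual_ex1:
  fixes u :: "nat \<Rightarrow> real^'m::finite"
  assumes b: "bij_betw idx {..n} (UNIV::'m set)" and card: "CARD('m) = Suc n"
    and on: "\<And>j l. j < n \<Longrightarrow> l < n \<Longrightarrow> u j \<bullet> u l = (if j = l then 1 else 0)"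
  shows "\<exists>!v. (\<forall>i<n. u i \<bullet> v = 0) \<and> norm v = 1 \<and> det (Mx n idx u v) = 1"
proof -
  have sp: "span (u ` {..<n}) \<noteq> UNIV"
  proof
    assume "span (u ` {..<n}) = UNIV"
    then have "dim (UNIV :: (real^'m) set) \<le> card (u ` {..<n})"
      using dim_le_card[of UNIV "u ` {..<n}"] by simp
    also have "\<dots> \<le> n" using card_image_le[of "{..<n}" u] by simp
    finally show False using card by simp
  qed
  then obtain a :: "real^'m" where a: "a \<noteq> 0" "\<And>x. x \<in> span (u ` {..<n}) \<Longrightarrow> a \<bullet> x = 0"
    using span_not_UNIV_orthogonal by blast
  define w where "w = a /\<^sub>R norm a"
  have ow: "u i \<bullet> w = 0" if "i < n" for i
    using a(2)[of "u i"] that span_base[of "u i" "u ` {..<n}"] by (simp add: w_def inner_commute)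
  have nw: "norm w = 1" using a(1) by (simp add: w_def)
  have ow': "u i \<bullet> (-w) = 0" if "i < n" for i using ow[OF that] by simp
  have nw': "norm (-w) = 1" using nw by simp
  have "det (Mx n idx u w) = 1 \<or> det (Mx n idx u w) = -1"
    by (rule det_orthogonal_matrix, rule Mx_orth[OF b on ow nw]) auto
  then obtain v where v: "\<forall>i<n. u i \<bullet> v = 0" "norm v = 1" "det (Mx n idx u v) = 1"
  proof
    assume "det (Mx n idx u w) = -1"
    then have "det (Mx n idx u ((-1) *\<^sub>R w)) = 1" using Mx_scale[OF b, of u "-1" w] by simp
    then show thesis using that[of "-w"] ow' nw' by simp
  qed (use ow nw that in auto)
  moreover have "v' = v" if v': "\<forall>i<n. u i \<bullet> v' = 0" "norm v' = 1" "det (Mx n idx u v') = 1" for v'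
  proof -
    let ?Q = "Mx n idx u v"
    have oQ: "orthogonal_matrix ?Q" using Mx_orth[OF b on _ v(2)] v(1) by blast
    have lt: "a \<noteq> idx n \<Longrightarrow> inv_into {..n} idx a < n" for a
      using idx_facts[OF b] by (metis le_neq_implies_less)
    have "?Q *v v' = (v \<bullet> v') *\<^sub>R axis (idx n) 1"
      using v'(1) lt by (auto simp: vec_eq_iff matrix_vector_mul_component Mx_row[OF b] axis_def)
    then have "transpose ?Q *v (?Q *v v') = transpose ?Q *v ((v \<bullet> v') *\<^sub>R axis (idx n) 1)" by simp
    also have "\<dots> = (v \<bullet> v') *\<^sub>R (transpose ?Q *v axis (idx n) 1)" by (simp add: matrix_vector_mult_scaleR)
    also have "transpose ?Q *v axis (idx n) 1 = row (idx n) ?Q" by (simp add: matrix_vector_mult_basis)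
    also have "row (idx n) ?Q = v" by (simp add: row_def vec_eq_iff Mx_row[OF b])
    finally have "transpose ?Q *v (?Q *v v') = (v \<bullet> v') *\<^sub>R v" .
    moreover have "transpose ?Q *v (?Q *v v') = v'"
      using oQ by (simp add: matrix_vector_mul_assoc orthogonal_matrix)
    ultimately have vv: "v' = (v \<bullet> v') *\<^sub>R v" by simp
    then have "det (Mx n idx u v') = (v \<bullet> v') * det ?Q" using Mx_scale[OF b] by metis
    then have "v \<bullet> v' = 1" using v'(3) v(3) by simp
    then show ?thesis using vv by simp
  qed
  ultimately show ?thesis by blast
qed



locale setting =
  fixes n :: nat and idx :: "nat \<Rightarrow> 'm::finite" and I :: "real set" and \<gamma> :: "real \<Rightarrow> real^'m"
  assumes n2: "n \<ge> 2" and card: "CARD('m) = Suc n" and bij: "bij_betw idx {..n} UNIV"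
    and opI: "open I" and sus: "spherical_unit_speed n I \<gamma>"
begin

abbreviation "U \<equiv> dual_curve n idx \<gamma>"

lemma gsm: "sm1 I \<gamma>" using sus opI smooth_on_sm1 unfolding spherical_unit_speed_def by blast
lemma kp: "\<And>i s. i \<in> {1..n-1} \<Longrightarrow> s\<in>I \<Longrightarrow> kap \<gamma> i s > 0"
  using sus unfolding spherical_unit_speed_def by blast
lemma g1: "\<And>s. s \<in> I \<Longrightarrow> norm (\<gamma> s) = 1"
  using sus unfolding spherical_unit_speed_def by auto

lemma ON: "s \<in> I \<Longrightarrow> j < n \<Longrightarrow> l < n \<Longrightarrow> ufr \<gamma> j s \<bullet> ufr \<gamma> l s = (if j = l then 1 else 0)"
  using frame_orthonormal[OF opI gsm kp g1, where n=n and i="n-1" and s=s and j=j and l=l] n2 by auto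

lemma usm: "j \<le> n-1 \<Longrightarrow> sm1 I (ufr \<gamma> j)"
  using frame_smooth[OF opI gsm, where n=n, OF kp] by blast

lemma U_props: assumes "s \<in> I"
  shows "\<forall>i<n. ufr \<gamma> i s \<bullet> U s = 0" "norm (U s) = 1"
proof -
  have "\<exists>!v. (\<forall>i<n. ufr \<gamma> i s \<bullet> v = 0) \<and> norm v = 1 \<and> det (Mx n idx (\<lambda>j. ufr \<gamma> j s) v) = 1"
    by (rule dual_ex1[OF bij card]) (use ON[OF assms] in auto)
  from theI'[OF this] show "\<forall>i<n. ufr \<gamma> i s \<bullet> U s = 0" "norm (U s) = 1"
    unfolding dual_curve_Mx by blast+
qed

lemma U_perp: "s \<in> I \<Longrightarrow> i < n \<Longrightarrow> ufr \<gamma> i s \<bullet> U s = 0" using U_props by blast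
lemma U_norm: "s \<in> I \<Longrightarrow> norm (U s) = 1" using U_props by blast

lemma dU_perp:
  assumes s: "s \<in> I" and dU: "U differentiable at s" and j: "j \<le> n-2"
  shows "ufr \<gamma> j s \<bullet> VD U s = 0"
proof -
  have d: "ufr \<gamma> j s \<bullet> VD U s + VD (ufr \<gamma> j) s \<bullet> U s = 0"
    by (rule inner_const_deriv[OF opI s _ dU, of _ 0]) (use sm1_diff[OF usm s] j U_perp n2 in auto)
  have fr: "VD (ufr \<gamma> j) s = kap \<gamma> (Suc j) s *\<^sub>R ufr \<gamma> (Suc j) s - kap \<gamma> j s *\<^sub>R pfr \<gamma> j s"
    by (rule frenet) (use kp[of "Suc j" s] s j n2 in auto)
  have p: "pfr \<gamma> j s \<bullet> U s = 0"
  proof (cases j)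
    case 0 then show ?thesis by (simp add: frame_0)
  next
    case (Suc j') then show ?thesis using U_perp[OF s, of j'] j n2 by (simp add: frame_Suc)
  qed
  have "VD (ufr \<gamma> j) s \<bullet> U s = 0"
    using U_perp[OF s, of "Suc j"] j n2 p by (simp add: fr inner_diff_left)
  then show ?thesis using d by simp
qed

lemma span_perp:
  assumes "P \<in> span ((\<lambda>j. ufr \<gamma> j s) ` {..n-2})" and "\<And>j. j \<le> n-2 \<Longrightarrow> ufr \<gamma> j s \<bullet> w = 0"
  shows "P \<bullet> w = 0"
proof -
  have "orthogonal w P"
    by (rule orthogonal_to_span[OF assms(1)]) (use assms(2) in \<open>auto simp: orthogonal_def inner_commute\<close>)
  then show ?thesis by (simp add: orthogonal_def inner_commute)
qed

end



lemma smooth_family: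
  fixes F :: "('a::real_normed_vector \<Rightarrow> 'b::real_normed_vector) set"
  assumes W: "open W"
    and cont: "\<And>f. f\<in>F \<Longrightarrow> continuous_on W f"
    and der: "\<And>f v. f\<in>F \<Longrightarrow> \<exists>g\<in>F. \<forall>x\<in>W. ((\<lambda>t. f (x + t *\<^sub>R v)) has_vector_derivative g x) (at 0)"
    and f: "f\<in>F"
  shows "smooth_on W f"
proof -
  have tr: "((\<lambda>t. h (x + t *\<^sub>R v)) has_vector_derivative d) (at 0)"
    if "x \<in> W" "\<And>y. y \<in> W \<Longrightarrow> h y = g y" "((\<lambda>t. g (x + t *\<^sub>R v)) has_vector_derivative d) (at 0)"
    for h g :: "'a \<Rightarrow> 'b" and x v d
  proof -
    have "open ((\<lambda>t::real. x + t *\<^sub>R v) -` W)"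
      by (rule continuous_open_vimage[OF W]) (auto intro!: continuous_intros)
    then have o: "open {t::real. x + t *\<^sub>R v \<in> W}" by (simp add: vimage_def)
    show ?thesis
      by (rule has_vector_derivative_transform_within_open[OF that(3) o]) (use that in auto)
  qed
  have A: "\<exists>g\<in>F. \<forall>x\<in>W. dder vs f x = g x" for vs
  proof (induction vs)
    case Nil then show ?case using f by auto
  next
    case (Cons v vs)
    then obtain g where g: "g \<in> F" "\<And>x. x\<in>W \<Longrightarrow> dder vs f x = g x" by blast
    obtain h where h: "h \<in> F" "\<And>x. x\<in>W \<Longrightarrow> ((\<lambda>t. g (x + t *\<^sub>R v)) has_vector_derivative h x) (at 0)"
      using der[OF g(1), of v] by blast
    have "dder (v # vs) f x = h x" if "x \<in> W" for x
      using tr[OF that g(2) h(2)[OF that]] by (simp add: vector_derivative_at)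
    then show ?case using h(1) by blast
  qed
  show ?thesis unfolding smooth_on_def
  proof (intro allI conjI ballI)
    fix vs
    obtain g where g: "g \<in> F" "\<And>x. x\<in>W \<Longrightarrow> dder vs f x = g x" using A by blast
    show "continuous_on W (dder vs f)" using continuous_on_cong cont[OF g(1)] g(2) by metis
    fix x v assume x: "x \<in> W"
    obtain h where h: "h \<in> F" "\<And>x. x\<in>W \<Longrightarrow> ((\<lambda>t. g (x + t *\<^sub>R v)) has_vector_derivative h x) (at 0)"
      using der[OF g(1), of v] by blast
    show "(\<lambda>t. dder vs f (x + t *\<^sub>R v)) differentiable at 0"
      using tr[OF x g(2) h(2)[OF x]] differentiableI_vector by blast
  qed
qed

lemma vec_hvd:
  fixes F :: "real \<Rightarrow> real^'m::finite"
  assumes "\<And>i. ((\<lambda>t. F t $ i) has_vector_derivative d $ i) (at t0)"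
  shows "(F has_vector_derivative d) (at t0)"
proof -
  have "(F has_derivative (\<lambda>h. h *\<^sub>R d)) (at t0 within UNIV)"
  proof (subst has_derivative_componentwise_within, intro ballI)
    fix b :: "real^'m" assume "b \<in> Basis"
    then obtain i where b: "b = axis i 1" by (auto simp: Basis_vec_def)
    show "((\<lambda>x. F x \<bullet> b) has_derivative (\<lambda>x. x *\<^sub>R d \<bullet> b)) (at t0)"
      using assms[of i] unfolding b has_vector_derivative_def by (simp add: inner_axis)
  qed
  then show ?thesis by (simp add: has_vector_derivative_def)
qed



inductive_set alg :: "'a::real_inner \<Rightarrow> ('a \<Rightarrow> real) set" for P :: 'a where
  alg_c: "(\<lambda>x. c) \<in> alg P"
| alg_l: "(\<lambda>x. x \<bullet> c) \<in> alg P"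
| alg_r: "(\<lambda>x. inverse (norm (P + x))) \<in> alg P"
| alg_add: "f \<in> alg P \<Longrightarrow> g \<in> alg P \<Longrightarrow> (\<lambda>x. f x + g x) \<in> alg P"
| alg_mul: "f \<in> alg P \<Longrightarrow> g \<in> alg P \<Longrightarrow> (\<lambda>x. f x * g x) \<in> alg P"

lemma r_deriv:
  fixes P x v :: "'a::real_inner"
  assumes "P + x \<noteq> 0"
  shows "((\<lambda>t. inverse (norm (P + (x + t *\<^sub>R v)))) has_real_derivative
     (-1) * (inverse (norm (P + x)) * (inverse (norm (P + x)) * inverse (norm (P + x)))) * (x \<bullet> v + P \<bullet> v)) (at 0)"
proof -
  let ?q = "\<lambda>t. (P + (x + t *\<^sub>R v)) \<bullet> (P + (x + t *\<^sub>R v))"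
  have q: "(?q has_real_derivative 2 * ((P + x) \<bullet> v)) (at 0)"
    by (auto intro!: derivative_eq_intros simp: inner_commute algebra_simps)
  have q0: "?q 0 > 0" using assms by simp
  have s: "((\<lambda>t. sqrt (?q t)) has_real_derivative (inverse (sqrt (?q 0)) / 2) * (2 * ((P + x) \<bullet> v))) (at 0)"
    by (rule DERIV_chain2[OF DERIV_real_sqrt[OF q0] q])
  have e: "\<And>t. sqrt (?q t) = norm (P + (x + t *\<^sub>R v))" by (simp add: norm_eq_sqrt_inner)
  have s': "((\<lambda>t. norm (P + (x + t *\<^sub>R v))) has_real_derivative ((P + x) \<bullet> v) / norm (P + x)) (at 0)"
    using s unfolding e by (simp add: norm_eq_sqrt_inner[symmetric] field_simps)
  have n0: "norm (P + (x + 0 *\<^sub>R v)) \<noteq> 0" using assms by simp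
  from DERIV_inverse_fun[OF s' n0] show ?thesis
    by (simp add: field_simps inner_add_left power2_eq_square power3_eq_cube)
qed

lemma alg_der:
  fixes P :: "'a::real_inner"
  shows "f \<in> alg P \<Longrightarrow> \<exists>g\<in>alg P. \<forall>x. P + x \<noteq> 0 \<longrightarrow> ((\<lambda>t. f (x + t *\<^sub>R v)) has_real_derivative g x) (at 0)"
proof (induction rule: alg.induct)
  case (alg_c c)
  show ?case by (rule bexI[where x="\<lambda>x. 0"]) (auto intro: alg.alg_c)
next
  case (alg_l c)
  have "((\<lambda>t. (x + t *\<^sub>R v) \<bullet> c) has_real_derivative v \<bullet> c) (at 0)" for x
  proof -
    have "(\<lambda>t. (x + t *\<^sub>R v) \<bullet> c) = (\<lambda>t. x \<bullet> c + t * (v \<bullet> c))" by (simp add: fun_eq_iff inner_add_left)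
    moreover have "((\<lambda>t. x \<bullet> c + t * (v \<bullet> c)) has_real_derivative v \<bullet> c) (at 0)"
      by (auto intro!: derivative_eq_intros)
    ultimately show ?thesis by simp
  qed
  then show ?case by (intro bexI[where x="\<lambda>x. v \<bullet> c"] alg.alg_c) auto
next
  case alg_r
  let ?r = "\<lambda>x. inverse (norm (P + x))"
  have "(\<lambda>x. (-1) * (?r x * (?r x * ?r x)) * (x \<bullet> v + P \<bullet> v)) \<in> alg P"
    by (intro alg.alg_mul alg.alg_add alg.alg_c alg.alg_l alg.alg_r)
  then show ?case by (rule bexI[rotated]) (use r_deriv in auto)
next
  case (alg_add f g)
  then obtain f' g' where fg: "f' \<in> alg P" "g' \<in> alg P"
    "\<And>x. P + x \<noteq> 0 \<Longrightarrow> ((\<lambda>t. f (x + t *\<^sub>R v)) has_real_derivative f' x) (at 0)"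
    "\<And>x. P + x \<noteq> 0 \<Longrightarrow> ((\<lambda>t. g (x + t *\<^sub>R v)) has_real_derivative g' x) (at 0)" by blast
  have "((\<lambda>t. f (x + t *\<^sub>R v) + g (x + t *\<^sub>R v)) has_real_derivative f' x + g' x) (at 0)"
    if "P + x \<noteq> 0" for x using DERIV_add[OF fg(3)[OF that] fg(4)[OF that]] .
  moreover have "(\<lambda>x. f' x + g' x) \<in> alg P" using fg(1,2) by (rule alg.alg_add)
  ultimately show ?case by (intro bexI[where x="\<lambda>x. f' x + g' x"]) auto
next
  case (alg_mul f g)
  then obtain f' g' where fg: "f' \<in> alg P" "g' \<in> alg P"
    "\<And>x. P + x \<noteq> 0 \<Longrightarrow> ((\<lambda>t. f (x + t *\<^sub>R v)) has_real_derivative f' x) (at 0)"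
    "\<And>x. P + x \<noteq> 0 \<Longrightarrow> ((\<lambda>t. g (x + t *\<^sub>R v)) has_real_derivative g' x) (at 0)" by blast
  have "((\<lambda>t. f (x + t *\<^sub>R v) * g (x + t *\<^sub>R v)) has_real_derivative f' x * g x + g' x * f x) (at 0)"
    if "P + x \<noteq> 0" for x using DERIV_mult[OF fg(3)[OF that] fg(4)[OF that]] by simp
  moreover have "(\<lambda>x. f' x * g x + g' x * f x) \<in> alg P"
    using fg(1,2) alg_mul.hyps by (intro alg.alg_add alg.alg_mul)
  ultimately show ?case by (intro bexI[where x="\<lambda>x. f' x * g x + g' x * f x"]) auto
qed

lemma alg_cont:
  fixes P :: "'a::real_inner"
  shows "f \<in> alg P \<Longrightarrow> P + x \<noteq> 0 \<Longrightarrow> isCont f x"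
proof (induction rule: alg.induct)
  case alg_r
  then show ?case by (intro continuous_intros) auto
next
  case (alg_add f g) then show ?case by (intro continuous_intros) auto
next
  case (alg_mul f g) then show ?case by (intro continuous_intros) auto
qed (intro continuous_intros)+



lemma alg_smooth:
  fixes P :: "real^'m::finite" and f :: "real^'m \<Rightarrow> real^'m"
  assumes W: "open W" and nz: "\<And>x. x\<in>W \<Longrightarrow> P + x \<noteq> 0" and f: "\<And>i. (\<lambda>x. f x $ i) \<in> alg P"
  shows "smooth_on W f"
proof (rule smooth_family[OF W, where F="{f. \<forall>i. (\<lambda>x. f x $ i) \<in> alg P}"])
  show "f \<in> {f. \<forall>i. (\<lambda>x. f x $ i) \<in> alg P}" using f by blast
next
  fix g :: "real^'m \<Rightarrow> real^'m" assume g: "g \<in> {f. \<forall>i. (\<lambda>x. f x $ i) \<in> alg P}"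
  have "continuous_on W (\<lambda>x. \<chi> i. g x $ i)"
  proof (rule continuous_on_vec_lambda)
    fix i show "continuous_on W (\<lambda>x. g x $ i)"
      by (rule continuous_at_imp_continuous_on) (use alg_cont g nz in blast)
  qed
  then show "continuous_on W g" by simp
next
  fix g :: "real^'m \<Rightarrow> real^'m" and v assume g: "g \<in> {f. \<forall>i. (\<lambda>x. f x $ i) \<in> alg P}"
  have "\<forall>i. \<exists>h. h \<in> alg P \<and> (\<forall>x. P + x \<noteq> 0 \<longrightarrow> ((\<lambda>t. g (x + t *\<^sub>R v) $ i) has_real_derivative h x) (at 0))"
    using alg_der g by blast
  then obtain G where G: "\<And>i. G i \<in> alg P"
    "\<And>i x. P + x \<noteq> 0 \<Longrightarrow> ((\<lambda>t. g (x + t *\<^sub>R v) $ i) has_real_derivative G i x) (at 0)"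
    using choice[of "\<lambda>i h. h \<in> alg P \<and> (\<forall>x. P + x \<noteq> 0 \<longrightarrow> ((\<lambda>t. g (x + t *\<^sub>R v) $ i) has_real_derivative h x) (at 0))"]
    by blast
  show "\<exists>h\<in>{f. \<forall>i. (\<lambda>x. f x $ i) \<in> alg P}. \<forall>x\<in>W. ((\<lambda>t. g (x + t *\<^sub>R v)) has_vector_derivative h x) (at 0)"
  proof (rule bexI[where x="\<lambda>x. \<chi> i. G i x"])
    show "(\<lambda>x. \<chi> i. G i x) \<in> {f. \<forall>i. (\<lambda>x. f x $ i) \<in> alg P}" using G(1) by simp
    show "\<forall>x\<in>W. ((\<lambda>t. g (x + t *\<^sub>R v)) has_vector_derivative (\<chi> i. G i x)) (at 0)"
    proof
      fix x assume "x \<in> W"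
      then show "((\<lambda>t. g (x + t *\<^sub>R v)) has_vector_derivative (\<chi> i. G i x)) (at 0)"
        using G(2) nz by (intro vec_hvd) (simp add: has_real_derivative_iff_has_vector_derivative[symmetric])
    qed
  qed
qed

definition psi :: "real^'m::finite \<Rightarrow> real^'m \<Rightarrow> real^'m" where
  "psi P x = inverse (norm (P + x)) *\<^sub>R (P + x)"

definition phi :: "real^'m::finite \<Rightarrow> real^'m \<Rightarrow> real^'m" where
  "phi P y = (2 * (P \<bullet> y)) *\<^sub>R y - P"

lemma psi_smooth:
  fixes P :: "real^'m::finite"
  assumes "open W" "\<And>x. x\<in>W \<Longrightarrow> P + x \<noteq> 0"
  shows "smooth_on W (psi P)"
proof (rule alg_smooth[OF assms])
  fix i
  have "(\<lambda>x. inverse (norm (P + x)) * ((\<lambda>x. P $ i) x + x \<bullet> axis i 1)) \<in> alg P"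
    by (intro alg.intros)
  then show "(\<lambda>x. psi P x $ i) \<in> alg P" by (simp add: psi_def inner_axis algebra_simps)
qed

lemma phi_smooth:
  fixes P :: "real^'m::finite"
  assumes "open W" "\<And>x. x\<in>W \<Longrightarrow> P + x \<noteq> 0"
  shows "smooth_on W (phi P)"
proof (rule alg_smooth[OF assms])
  fix i
  have "(\<lambda>y. ((\<lambda>y. 2) y * (y \<bullet> P)) * (y \<bullet> axis i 1) + (\<lambda>y. - (P $ i)) y) \<in> alg P"
    by (intro alg.intros)
  then show "(\<lambda>x. phi P x $ i) \<in> alg P" by (simp add: phi_def inner_axis algebra_simps inner_commute)
qed



lemma ped_ort:
  fixes P U :: "real^'m::finite"
  assumes P: "norm P = 1" and U: "norm U = 1"
  shows "(P - (P \<bullet> U) *\<^sub>R U) /\<^sub>R sqrt (1 - (P \<bullet> U)\<^sup>2) = psi P (P - (2 * (P \<bullet> U)) *\<^sub>R U)"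
proof -
  let ?a = "P \<bullet> U"
  have PP: "P \<bullet> P = 1" and UU: "U \<bullet> U = 1" using P U by (simp_all add: dot_square_norm)
  have e: "P + (P - (2 * ?a) *\<^sub>R U) = 2 *\<^sub>R (P - ?a *\<^sub>R U)" by (simp add: vec_eq_iff algebra_simps)
  have "(P - ?a *\<^sub>R U) \<bullet> (P - ?a *\<^sub>R U) = 1 - ?a\<^sup>2"
    using PP UU by (simp add: inner_diff_left inner_diff_right inner_commute power2_eq_square)
  then have n: "norm (P - ?a *\<^sub>R U) = sqrt (1 - ?a\<^sup>2)" by (simp add: norm_eq_sqrt_inner)
  show ?thesis unfolding psi_def e using n by simp
qed

lemma sphere_inner: "x \<in> sphere (0::'a::real_inner) 1 \<longleftrightarrow> x \<bullet> x = 1"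
  by (simp add: norm_eq_1)

lemma diffeo_psi:
  fixes P :: "real^'m::finite"
  assumes P: "norm P = 1"
  shows "diffeo_germ (sphere 0 1) P P (psi P)"
  unfolding diffeo_germ_def
proof (rule conjI)
  show "psi P P = P" using P by (simp add: psi_def scaleR_2[symmetric] norm_scaleR)
next
  have PP: "P \<bullet> P = 1" using P by (simp add: dot_square_norm)
  show "\<exists>U V \<phi>. open U \<and> open V \<and> P \<in> U \<and> P \<in> V \<and> smooth_on U (psi P) \<and> smooth_on V \<phi> \<and>
        (\<forall>x\<in>sphere 0 1 \<inter> U. psi P x \<in> sphere 0 1 \<inter> V \<and> \<phi> (psi P x) = x) \<and>
        (\<forall>y\<in>sphere 0 1 \<inter> V. \<phi> y \<in> sphere 0 1 \<inter> U \<and> psi P (\<phi> y) = y)"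
  proof (rule exI[where x="ball P (1/2)"], rule exI[where x="{y. 0 < P \<bullet> y \<and> 15/16 < (P \<bullet> y)\<^sup>2}"],
       rule exI[where x="phi P"], intro conjI)
  show "open (ball P (1/2))" by simp
  show "open {y. 0 < P \<bullet> y \<and> 15/16 < (P \<bullet> y)\<^sup>2}"
  proof -
    have "open ((\<lambda>y. P \<bullet> y) -` {t. 0 < t \<and> 15/16 < t\<^sup>2})"
      by (rule continuous_open_vimage) (auto intro!: continuous_intros open_Collect_conj open_Collect_less)
    then show ?thesis by (simp add: vimage_def)
  qed
  show "P \<in> ball P (1/2)" by simp
  show "P \<in> {y. 0 < P \<bullet> y \<and> 15/16 < (P \<bullet> y)\<^sup>2}" using PP by simp
  show "smooth_on (ball P (1/2)) (psi P)"
  proof (rule psi_smooth)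
    show "open (ball P (1/2))" by simp
  next
    fix x assume x: "x \<in> ball P (1/2)"
    show "P + x \<noteq> 0"
    proof
      assume "P + x = 0" then have "x = - P" by (simp add: add_eq_0_iff)
      then have "P - x = 2 *\<^sub>R P" by (simp add: vec_eq_iff)
      then have "norm (P - x) = 2" using P by simp
      then show False using x by (simp add: dist_norm)
    qed
  qed
  show "smooth_on {y. 0 < P \<bullet> y \<and> 15/16 < (P \<bullet> y)\<^sup>2} (phi P)"
  proof (rule phi_smooth)
    show "open {y. 0 < P \<bullet> y \<and> 15/16 < (P \<bullet> y)\<^sup>2}" by fact
    fix x assume x: "x \<in> {y. 0 < P \<bullet> y \<and> 15/16 < (P \<bullet> y)\<^sup>2}"
    show "P + x \<noteq> 0"
    proof
      assume "P + x = 0" then have "x = - P" by (simp add: add_eq_0_iff)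
      then show False using x PP by simp
    qed
  qed
  show "\<forall>x\<in>sphere 0 1 \<inter> ball P (1/2). psi P x \<in> sphere 0 1 \<inter> {y. 0 < P \<bullet> y \<and> 15/16 < (P \<bullet> y)\<^sup>2} \<and> phi P (psi P x) = x"
  proof
    fix x assume "x \<in> sphere 0 1 \<inter> ball P (1/2)"
    then have xx: "x \<bullet> x = 1" and d: "norm (P - x) < 1/2" by (auto simp: dot_square_norm dist_norm)
    define b where "b = P \<bullet> x"
    have "(P - x) \<bullet> (P - x) < 1/4"
    proof -
      have "norm (P - x) ^ 2 < (1/2)^2" using d by (intro power_strict_mono) auto
      then show ?thesis by (simp add: dot_square_norm power2_eq_square)
    qed
    then have b: "b > 7/8" using PP xx by (simp add: b_def inner_diff_left inner_diff_right inner_commute)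
    define N where "N = norm (P + x)"
    have N2: "N\<^sup>2 = 2 + 2 * b"
      using PP xx by (simp add: N_def b_def power2_norm_eq_inner inner_add_left inner_add_right inner_commute)
    have "N \<noteq> 0" using N2 b by auto
    then have Npos: "N > 0" unfolding N_def by simp
    have Pp: "P \<bullet> psi P x = N / 2"
    proof -
      have "P \<bullet> psi P x = (1 + b) / N" using PP by (simp add: psi_def N_def[symmetric] b_def inner_add_right divide_inverse)
      also have "1 + b = N\<^sup>2 / 2" using N2 by simp
      also have "(N\<^sup>2 / 2) / N = N / 2" using Npos by (simp add: power2_eq_square)
      finally show ?thesis .
    qed
    have ps: "psi P x = inverse N *\<^sub>R (P + x)" by (simp add: psi_def N_def)
    have "norm (psi P x) = 1" unfolding ps using Npos by (simp add: N_def[symmetric])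
    moreover have "0 < P \<bullet> psi P x" using Pp Npos by simp
    moreover have "15/16 < (P \<bullet> psi P x)\<^sup>2"
    proof -
      have "(P \<bullet> psi P x)\<^sup>2 = N\<^sup>2 / 4" unfolding Pp by (simp add: power_divide)
      then show ?thesis using N2 b by simp
    qed
    moreover have "phi P (psi P x) = x"
    proof -
      have "phi P (psi P x) = (2 * (N/2)) *\<^sub>R psi P x - P"
        by (simp only: phi_def Pp)
      also have "\<dots> = (P + x) - P" unfolding ps using Npos by simp
      finally show ?thesis by simp
    qed
    ultimately show "psi P x \<in> sphere 0 1 \<inter> {y. 0 < P \<bullet> y \<and> 15/16 < (P \<bullet> y)\<^sup>2} \<and> phi P (psi P x) = x"
      by simp
  qed
  show "\<forall>y\<in>sphere 0 1 \<inter> {y. 0 < P \<bullet> y \<and> 15/16 < (P \<bullet> y)\<^sup>2}. phi P y \<in> sphere 0 1 \<inter> ball P (1/2) \<and> psi P (phi P y) = y"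
  proof
    fix y assume "y \<in> sphere 0 1 \<inter> {y. 0 < P \<bullet> y \<and> 15/16 < (P \<bullet> y)\<^sup>2}"
    then have yy: "y \<bullet> y = 1" and a0: "0 < P \<bullet> y" and a2: "15/16 < (P \<bullet> y)\<^sup>2"
      by (auto simp: sphere_inner norm_eq_1)
    define a where "a = P \<bullet> y"
    have ay: "P \<bullet> y = a" "y \<bullet> P = a" by (simp_all add: a_def inner_commute)
    have ph: "phi P y = (2*a) *\<^sub>R y - P" by (simp add: phi_def a_def)
    have ph2: "phi P y - P = (2*a) *\<^sub>R y - 2 *\<^sub>R P" by (simp add: ph vec_eq_iff)
    have "phi P y \<bullet> phi P y = 1"
      unfolding ph by (simp add: inner_diff_left inner_diff_right PP yy ay)
    moreover have "(phi P y - P) \<bullet> (phi P y - P) = 4 * (1 - a\<^sup>2)"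
      unfolding ph2 by (simp add: inner_diff_left inner_diff_right PP yy ay) (simp add: power2_eq_square algebra_simps)
    then have "norm (phi P y - P) ^ 2 = 4 * (1 - a\<^sup>2)" by (simp add: power2_norm_eq_inner)
    then have "norm (P - phi P y) ^ 2 = 4 * (1 - a\<^sup>2)" by (simp add: norm_minus_commute)
    then have "norm (P - phi P y) ^ 2 < (1/2)^2"
      using a2 unfolding a_def by (simp add: power2_eq_square)
    then have "norm (P - phi P y) < 1/2" using power_less_imp_less_base by fastforce
    moreover have "psi P (phi P y) = y"
    proof -
      have "P + phi P y = (2 * a) *\<^sub>R y" by (simp add: phi_def a_def)
      moreover have "norm ((2 * a) *\<^sub>R y) = 2 * a" using yy a0 by (simp add: a_def norm_eq_1[symmetric])
      ultimately show ?thesis using a0 by (simp add: psi_def a_def)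
    qed
    ultimately show "phi P y \<in> sphere 0 1 \<inter> ball P (1/2) \<and> psi P (phi P y) = y"
      by (simp add: sphere_inner norm_eq_1 dist_norm)
  qed
  qed
qed



lemma mvt1:
  fixes h :: "real \<Rightarrow> 'a::real_normed_vector"
  assumes "\<And>t. t \<in> closed_segment 0 c \<Longrightarrow> (h has_vector_derivative d t) (at t)"
    and "\<And>t. t \<in> closed_segment 0 c \<Longrightarrow> norm (d t) \<le> M"
  shows "norm (h c - h 0) \<le> M * \<bar>c\<bar>"
proof -
  have "norm (h c - h 0) \<le> M * norm (c - 0)"
  proof (rule differentiable_bound[where f'="\<lambda>t u. u *\<^sub>R d t"])
    show "convex (closed_segment 0 c)" by simp
    show "(h has_derivative (\<lambda>u. u *\<^sub>R d t)) (at t within closed_segment 0 c)"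
      if "t \<in> closed_segment 0 c" for t
      using assms(1)[OF that] unfolding has_vector_derivative_def by (rule has_derivative_at_withinI)
    show "onorm (\<lambda>u. u *\<^sub>R d t) \<le> M" if "t \<in> closed_segment 0 c" for t
      using assms(2)[OF that] onorm_scaleR_left[OF bounded_linear_ident, of "d t"] onorm_id[where 'a=real] by simp
  qed auto
  then show ?thesis by simp
qed

lemma smooth_dir:
  fixes \<psi> :: "'a::real_normed_vector \<Rightarrow> 'b::real_normed_vector"
  assumes "smooth_on W \<psi>" "q t \<in> W" "\<And>s. q s = z + s *\<^sub>R e"
  shows "((\<lambda>s. \<psi> (q s)) has_vector_derivative dder [e] \<psi> (q t)) (at t)"
proof -
  have qq: "\<And>s. q t + s *\<^sub>R e = q (t + s)" using assms(3) by (simp add: algebra_simps)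
  have "(\<lambda>s. dder [] \<psi> (q t + s *\<^sub>R e)) differentiable (at 0)"
    using assms(1,2) unfolding smooth_on_def by blast
  then have d: "(\<lambda>s. \<psi> (q (t + s))) differentiable (at 0)" unfolding qq by simp
  then have "(\<lambda>s. \<psi> (q s)) differentiable (at t)" using shift_diff[of "\<lambda>s. \<psi> (q s)"] by simp
  moreover have "vector_derivative (\<lambda>s. \<psi> (q s)) (at t) = dder [e] \<psi> (q t)"
    using shift_vd[of "\<lambda>s. \<psi> (q s)" t] by (simp add: qq)
  ultimately show ?thesis using vector_derivative_works by metis
qed



lemma smooth_lip:
  fixes \<psi> :: "real^'m::finite \<Rightarrow> 'b::real_normed_vector"
  assumes W: "open W" and p: "p \<in> W" and sm: "smooth_on W \<psi>"
  shows "\<exists>L \<delta>. \<delta> > 0 \<and> (\<forall>y. norm (y - p) < \<delta> \<longrightarrow> norm (\<psi> y - \<psi> p) \<le> L * norm (y - p))"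
proof -
  obtain \<delta> where d: "\<delta> > 0" "cball p \<delta> \<subseteq> W" using open_contains_cball W p by blast
  have sm': "\<And>vs. continuous_on W (dder vs \<psi>)" using sm unfolding smooth_on_def by blast
  have ex: "\<forall>i. \<exists>B. \<forall>z\<in>cball p \<delta>. norm (dder [axis i 1] \<psi> z) \<le> B"
  proof
    fix i
    have c: "continuous_on (cball p \<delta>) (dder [axis i 1] \<psi>)"
      by (rule continuous_on_subset[OF sm' d(2)])
    have "bounded (dder [axis i 1] \<psi> ` cball p \<delta>)"
      by (rule compact_imp_bounded, rule compact_continuous_image[OF c]) simp
    then obtain B where "\<forall>x\<in>dder [axis i 1] \<psi> ` cball p \<delta>. norm x \<le> B" unfolding bounded_iff by blast
    then show "\<exists>B. \<forall>z\<in>cball p \<delta>. norm (dder [axis i 1] \<psi> z) \<le> B" by auto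
  qed
  obtain Bf where Bf0: "\<forall>i. \<forall>z\<in>cball p \<delta>. norm (dder [axis i 1] \<psi> z) \<le> Bf i"
    using choice[OF ex] by blast
  have Bf: "\<And>i z. z \<in> cball p \<delta> \<Longrightarrow> norm (dder [axis i 1] \<psi> z) \<le> Bf i" using Bf0 by blast
  define M where "M = (\<Sum>i\<in>UNIV. \<bar>Bf i\<bar>)"
  have M: "\<And>i z. z \<in> cball p \<delta> \<Longrightarrow> norm (dder [axis i 1] \<psi> z) \<le> M"
  proof -
    fix i z assume "z \<in> cball p \<delta>"
    then have "norm (dder [axis i 1] \<psi> z) \<le> \<bar>Bf i\<bar>" using Bf[of z i] by simp
    also have "\<bar>Bf i\<bar> \<le> M" unfolding M_def by (rule member_le_sum) auto
    finally show "norm (dder [axis i 1] \<psi> z) \<le> M" .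
  qed
  have M0: "M \<ge> 0" unfolding M_def by (simp add: sum_nonneg)
  have claim: "finite S \<Longrightarrow> \<forall>y. norm (y - p) < \<delta> \<and> (\<forall>j. j \<notin> S \<longrightarrow> y$j = p$j) \<longrightarrow>
      norm (\<psi> y - \<psi> p) \<le> (M * card S) * norm (y - p)" for S
  proof (induction S rule: finite_induct)
    case empty
    have "y = p" if "\<forall>j. y$j = p$j" for y :: "real^'m" using that by (simp add: vec_eq_iff)
    then show ?case by auto
  next
    case (insert i S)
    show ?case
    proof (intro allI impI, elim conjE)
      fix y :: "real^'m" assume y: "norm (y - p) < \<delta>" and out: "\<forall>j. j \<notin> insert i S \<longrightarrow> y$j = p$j"
      define y' where "y' = (\<chi> j. if j = i then p$i else y$j)"
      define c where "c = y$i - p$i"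
      define q where "q = (\<lambda>s. y' + s *\<^sub>R axis i (1::real))"
      have out': "\<forall>j. j \<notin> S \<longrightarrow> y'$j = p$j" using out by (auto simp: y'_def)
      have ny': "norm (y' - p) \<le> norm (y - p)"
        by (rule norm_le_componentwise_cart) (auto simp: y'_def)
      have IH: "norm (\<psi> y' - \<psi> p) \<le> (M * card S) * norm (y - p)"
      proof -
        have "norm (\<psi> y' - \<psi> p) \<le> (M * card S) * norm (y' - p)"
          using insert.IH out' ny' y by auto
        also have "\<dots> \<le> (M * card S) * norm (y - p)" using ny' M0 by (intro mult_left_mono) auto
        finally show ?thesis .
      qed
      have qc: "q c = y" by (simp add: q_def y'_def c_def vec_eq_iff axis_def)
      have q0: "q 0 = y'" by (simp add: q_def)
      have qin: "q t \<in> cball p \<delta>" if t: "t \<in> closed_segment 0 c" for t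
      proof -
        have "\<bar>t\<bar> \<le> \<bar>c\<bar>" using t by (auto simp: closed_segment_eq_real_ivl split: if_splits)
        then have "norm (q t - p) \<le> norm (y - p)"
          by (intro norm_le_componentwise_cart) (auto simp: q_def y'_def c_def axis_def)
        then show ?thesis using y by (simp add: dist_norm norm_minus_commute)
      qed
      have "norm (\<psi> (q c) - \<psi> (q 0)) \<le> M * \<bar>c\<bar>"
      proof (rule mvt1[where d="\<lambda>t. dder [axis i 1] \<psi> (q t)"])
        fix t assume t: "t \<in> closed_segment 0 c"
        show "((\<lambda>t. \<psi> (q t)) has_vector_derivative dder [axis i 1] \<psi> (q t)) (at t)"
          by (rule smooth_dir[OF sm]) (use qin[OF t] d(2) q_def in auto)
        show "norm (dder [axis i 1] \<psi> (q t)) \<le> M" using M qin[OF t] by blast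
      qed
      also have "M * \<bar>c\<bar> \<le> M * norm (y - p)"
        using component_le_norm_cart[of "y - p" i] M0 by (intro mult_left_mono) (auto simp: c_def)
      finally have step: "norm (\<psi> y - \<psi> y') \<le> M * norm (y - p)" using qc q0 by simp
      have "norm (\<psi> y - \<psi> p) \<le> norm (\<psi> y - \<psi> y') + norm (\<psi> y' - \<psi> p)"
        by (rule norm_diff_triangle_le[of _ "\<psi> y'"]) simp_all
      also have "\<dots> \<le> M * norm (y - p) + (M * card S) * norm (y - p)" using step IH by simp
      also have "\<dots> = (M * card (insert i S)) * norm (y - p)"
        using insert.hyps by (simp add: algebra_simps)
      finally show "norm (\<psi> y - \<psi> p) \<le> (M * card (insert i S)) * norm (y - p)" .
    qed
  qed
  show ?thesis
    using claim[of UNIV] d(1) by auto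
qed



lemma zero_deriv_cmp:
  fixes f :: "real \<Rightarrow> 'a::real_normed_vector" and g :: "real \<Rightarrow> 'b::real_normed_vector"
  assumes g: "(g has_vector_derivative 0) (at x)" and L: "L \<ge> 0"
    and d0: "d0 > 0" and cmp: "\<And>y. \<bar>y - x\<bar> < d0 \<Longrightarrow> norm (f y - f x) \<le> L * norm (g y - g x)"
  shows "(f has_vector_derivative 0) (at x)"
proof -
  have g': "\<forall>e>0. \<exists>d>0. \<forall>y. norm (y - x) < d \<longrightarrow> norm (g y - g x) \<le> e * norm (y - x)"
    using g unfolding has_vector_derivative_def has_derivative_at_alt by simp
  have "\<forall>e>0. \<exists>d>0. \<forall>y. norm (y - x) < d \<longrightarrow> norm (f y - f x - (y - x) *\<^sub>R 0) \<le> e * norm (y - x)"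
  proof (intro allI impI)
    fix e :: real assume e: "e > 0"
    then have "e / (L + 1) > 0" using L by simp
    then obtain d where d: "d > 0" "\<And>y. norm (y - x) < d \<Longrightarrow> norm (g y - g x) \<le> e / (L + 1) * norm (y - x)"
      using g' by blast
    show "\<exists>d>0. \<forall>y. norm (y - x) < d \<longrightarrow> norm (f y - f x - (y - x) *\<^sub>R 0) \<le> e * norm (y - x)"
    proof (intro exI[where x="min d d0"] conjI allI impI)
      show "min d d0 > 0" using d d0 by simp
      fix y :: real assume y: "norm (y - x) < min d d0"
      have "norm (f y - f x) \<le> L * norm (g y - g x)" using cmp y by simp
      also have "\<dots> \<le> L * (e / (L + 1) * norm (y - x))" using d(2) y L by (intro mult_left_mono) auto
      also have "\<dots> \<le> e * norm (y - x)"
      proof -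
        have "L * (e / (L + 1)) \<le> e" using L e by (simp add: field_simps)
        then show ?thesis by (metis mult.assoc mult_right_mono norm_ge_zero)
      qed
      finally show "norm (f y - f x - (y - x) *\<^sub>R 0) \<le> e * norm (y - x)" by simp
    qed
  qed
  then show ?thesis unfolding has_vector_derivative_def has_derivative_at_alt
    by (simp add: bounded_linear_scaleR_left)
qed

context setting
begin

lemma ort_eq: "orthotomic n idx \<gamma> P = (\<lambda>s. P - (2 * (P \<bullet> U s)) *\<^sub>R U s)"
  by (simp add: fun_eq_iff orthotomic_def Let_def)

lemma ped_eq: "pedal n idx \<gamma> P = (\<lambda>s. (P - (P \<bullet> U s) *\<^sub>R U s) /\<^sub>R sqrt (1 - (P \<bullet> U s)\<^sup>2))"
  by (simp add: fun_eq_iff pedal_def Let_def)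

lemma P_facts:
  assumes s0: "s0 \<in> I" and Pss: "P \<in> sub_sphere n idx \<gamma> (n - 2) s0"
  shows "norm P = 1" "P \<bullet> U s0 = 0" "U differentiable at s0 \<Longrightarrow> P \<bullet> VD U s0 = 0"
proof -
  have Pin: "P \<in> sphere 0 1" "P \<in> span ((\<lambda>j. ufr \<gamma> j s0) ` {..n-2})"
    using Pss unfolding sub_sphere_def by auto
  show "norm P = 1" using Pin(1) by simp
  show "P \<bullet> U s0 = 0"
    by (rule span_perp[OF Pin(2)]) (use U_perp[OF s0] n2 in auto)
  show "U differentiable at s0 \<Longrightarrow> P \<bullet> VD U s0 = 0"
    by (rule span_perp[OF Pin(2)]) (use dU_perp[OF s0] in auto)
qed

lemma part1:
  assumes s0: "s0 \<in> I" and Pss: "P \<in> sub_sphere n idx \<gamma> (n - 2) s0"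
  shows "L_equiv (orthotomic n idx \<gamma> P) (pedal n idx \<gamma> P) s0"
proof -
  note Pf = P_facts[OF s0 Pss]
  have o0: "orthotomic n idx \<gamma> P s0 = P" unfolding ort_eq using Pf(2) by simp
  have p0: "pedal n idx \<gamma> P s0 = P" unfolding ped_eq using Pf(2) by simp
  have ev: "\<forall>\<^sub>F s in nhds s0. pedal n idx \<gamma> P s = psi P (orthotomic n idx \<gamma> P s)"
    unfolding eventually_nhds
    by (rule exI[where x=I]) (use opI s0 ped_ort[OF Pf(1) U_norm] in \<open>auto simp: ort_eq ped_eq\<close>)
  show ?thesis unfolding L_equiv_def o0 p0 using diffeo_psi[OF Pf(1)] ev by blast
qed

lemma ort_deriv0:
  assumes dU: "U differentiable at s0" and a0: "P \<bullet> U s0 = 0" and a1: "P \<bullet> VD U s0 = 0"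
  shows "(orthotomic n idx \<gamma> P has_vector_derivative 0) (at s0)"
proof -
  have hU: "(U has_vector_derivative VD U s0) (at s0)" using VD_has[OF dU] .
  have "((\<lambda>s. P \<bullet> U s) has_vector_derivative P \<bullet> VD U s0) (at s0)"
    using bounded_linear.has_vector_derivative[OF bounded_linear_inner_right hU] .
  then have ha: "((\<lambda>s. 2 * (P \<bullet> U s)) has_field_derivative 2 * (P \<bullet> VD U s0)) (at s0)"
    unfolding has_real_derivative_iff_has_vector_derivative[symmetric] by (auto intro!: derivative_eq_intros)
  have "((\<lambda>s. P - (2 * (P \<bullet> U s)) *\<^sub>R U s) has_vector_derivative
        0 - ((2 * (P \<bullet> U s0)) *\<^sub>R VD U s0 + (2 * (P \<bullet> VD U s0)) *\<^sub>R U s0)) (at s0)"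
    by (rule has_vector_derivative_diff[OF has_vector_derivative_const has_vector_derivative_scaleR[OF ha hU]])
  then show ?thesis unfolding ort_eq using a0 a1 by simp
qed

lemma part2:
  assumes s0: "s0 \<in> I" and Pss: "P \<in> sub_sphere n idx \<gamma> (n - 2) s0"
    and dUI: "\<forall>s\<in>I. U differentiable (at s) \<and> vector_derivative U (at s) \<noteq> 0"
  shows "\<not> A_equiv (orthotomic n idx \<gamma> P) U s0"
proof
  assume "A_equiv (orthotomic n idx \<gamma> P) U s0"
  then obtain \<phi> \<psi> where d\<phi>: "diffeo_germ (UNIV :: real set) s0 s0 \<phi>"
    and d\<psi>: "diffeo_germ (sphere 0 1) (orthotomic n idx \<gamma> P s0) (U s0) \<psi>"
    and ev: "\<forall>\<^sub>F s in nhds s0. U (\<phi> s) = \<psi> (orthotomic n idx \<gamma> P s)"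
    unfolding A_equiv_def by blast
  note Pf = P_facts[OF s0 Pss]
  have dU: "U differentiable at s0" and nU: "VD U s0 \<noteq> 0" using dUI s0 by (auto simp: VD_def)
  have o0: "orthotomic n idx \<gamma> P s0 = P" unfolding ort_eq using Pf(2) by simp
  obtain U1 V1 ch where U1: "open U1" "s0 \<in> U1" and V1: "open V1" "s0 \<in> V1"
    and sphi: "smooth_on U1 \<phi>" and schi: "smooth_on V1 ch"
    and inv1: "\<And>x. x \<in> U1 \<Longrightarrow> ch (\<phi> x) = x" and p0: "\<phi> s0 = s0"
    using d\<phi> unfolding diffeo_germ_def by auto
  have sdiff: "f differentiable at s0" if "smooth_on S f" "s0 \<in> S" for S and f :: "real \<Rightarrow> real"
  proof -
    have "(\<lambda>t. dder [] f (s0 + t *\<^sub>R 1)) differentiable (at 0)" using that unfolding smooth_on_def by blast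
    then show ?thesis using shift_diff[of f s0] by simp
  qed
  have hp: "(\<phi> has_vector_derivative VD \<phi> s0) (at s0)" using VD_has sdiff[OF sphi U1(2)] by blast
  have hc: "(ch has_vector_derivative VD ch s0) (at (\<phi> s0))" using VD_has sdiff[OF schi V1(2)] p0 by simp
  have "((ch \<circ> \<phi>) has_vector_derivative VD \<phi> s0 *\<^sub>R VD ch s0) (at s0)" by (rule vector_diff_chain_at[OF hp hc])
  moreover have "((ch \<circ> \<phi>) has_vector_derivative 1) (at s0)"
    by (rule has_vector_derivative_transform_within_open[OF has_vector_derivative_id U1]) (use inv1 in auto)
  ultimately have "VD \<phi> s0 *\<^sub>R VD ch s0 = 1" using vector_derivative_unique_at by blast
  then have dp: "VD \<phi> s0 \<noteq> 0" by auto
  have hU: "(U has_vector_derivative VD U s0) (at (\<phi> s0))" using VD_has[OF dU] p0 by simp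
  have h1: "((\<lambda>s. U (\<phi> s)) has_vector_derivative VD \<phi> s0 *\<^sub>R VD U s0) (at s0)"
    using vector_diff_chain_at[OF hp hU] by (simp add: o_def)
  have h2: "((\<lambda>s. \<psi> (orthotomic n idx \<gamma> P s)) has_vector_derivative VD \<phi> s0 *\<^sub>R VD U s0) (at s0)"
  proof -
    have e1: "\<forall>\<^sub>F s in nhds s0. s \<in> UNIV \<longrightarrow> U (\<phi> s) = \<psi> (orthotomic n idx \<gamma> P s)" using ev by simp
    have e2: "U (\<phi> s0) = \<psi> (orthotomic n idx \<gamma> P s0)" using eventually_nhds_x_imp_x[OF ev] .
    show ?thesis using h1 has_vector_derivative_cong_ev[OF e1 e2] by simp
  qed
  obtain U2 where U2: "open U2" "P \<in> U2" "smooth_on U2 \<psi>"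
    using d\<psi> o0 unfolding diffeo_germ_def by auto
  obtain L \<delta> where L: "\<delta> > 0" "\<And>y. norm (y - P) < \<delta> \<Longrightarrow> norm (\<psi> y - \<psi> P) \<le> L * norm (y - P)"
    using smooth_lip[OF U2] by blast
  have hO: "(orthotomic n idx \<gamma> P has_vector_derivative 0) (at s0)"
    by (rule ort_deriv0[OF dU Pf(2) Pf(3)[OF dU]])
  have "isCont (orthotomic n idx \<gamma> P) s0"
    using hO has_vector_derivative_continuous by blast
  then obtain d0 where d0: "d0 > 0" "\<And>y. dist y s0 < d0 \<Longrightarrow> dist (orthotomic n idx \<gamma> P y) (orthotomic n idx \<gamma> P s0) < \<delta>"
    unfolding continuous_at_eps_delta using L(1) by blast
  have "((\<lambda>s. \<psi> (orthotomic n idx \<gamma> P s)) has_vector_derivative 0) (at s0)"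
  proof (rule zero_deriv_cmp[OF hO _ d0(1)])
    show "\<bar>L\<bar> \<ge> 0" by simp
    fix y assume "\<bar>y - s0\<bar> < d0"
    then have "norm (orthotomic n idx \<gamma> P y - P) < \<delta>" using d0(2)[of y] o0 by (simp add: dist_norm)
    then have "norm (\<psi> (orthotomic n idx \<gamma> P y) - \<psi> P) \<le> L * norm (orthotomic n idx \<gamma> P y - P)" by (rule L(2))
    also have "\<dots> \<le> \<bar>L\<bar> * norm (orthotomic n idx \<gamma> P y - P)" by (intro mult_right_mono) auto
    finally show "norm (\<psi> (orthotomic n idx \<gamma> P y) - \<psi> (orthotomic n idx \<gamma> P s0))
        \<le> \<bar>L\<bar> * norm (orthotomic n idx \<gamma> P y - orthotomic n idx \<gamma> P s0)" using o0 by simp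
  qed
  then have "VD \<phi> s0 *\<^sub>R VD U s0 = 0" using h2 vector_derivative_unique_at by blast
  then show False using dp nU by simp
qed

end


theorem mainTheorem10:
  fixes n :: nat and idx :: "nat \<Rightarrow> 'm::finite" and I :: "real set"
    and \<gamma> :: "real \<Rightarrow> real^'m" and s0 :: real and P :: "real^'m"
  assumes "n \<ge> 2" and "CARD('m) = Suc n" and "bij_betw idx {..n} UNIV"
    and "open I" and "is_interval I"
    and "spherical_unit_speed n I \<gamma>"
    and "\<forall>s\<in>I. dual_curve n idx \<gamma> differentiable (at s) \<and>
               vector_derivative (dual_curve n idx \<gamma>) (at s) \<noteq> 0"
    and "s0 \<in> I"
    and "P \<in> sub_sphere n idx \<gamma> (n - 2) s0"
  shows "L_equiv (orthotomic n idx \<gamma> P) (pedal n idx \<gamma> P) s0 \<and>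
         \<not> A_equiv (orthotomic n idx \<gamma> P) (dual_curve n idx \<gamma>) s0"
proof -
  interpret setting n idx I \<gamma>
    by (unfold_locales) (use assms in auto)
  show ?thesis using part1[OF assms(8,9)] part2[OF assms(8,9,7)] by blast
qed

end
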